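(* Let $A,B\in \mathbb{R}^{m\times n}$ with $m<n$ and $b\in \mathbb{R}^m$. If the equation $Ax-B|x|=b$ has a solution $x_*$ with sign pattern $s=\operatorname{sign}(x_* )\in\{-1,0,1\}^n$ such that $x_*$ has more than $\operatorname{rank}(A\operatorname{diag}(s) - B)$ nonzero entries, then $Ax-B|x|=b$ has infinitely many solutions with the sign pattern $s$.
   Context: $|x|$ is the entrywise absolute value; $\operatorname{diag}(s)$ is the diagonal matrix with diagonal $s$; $\operatorname{sign}$ is applied entrywise with $\operatorname{sign}(r)=1,0,-1$ for $r>0,r=0,r<0$. A vector $x$ has sign pattern $s$ if $\operatorname{sign}(x_{(i)})=s_{(i)}$ for all $i$. *)

theory Defs
  imports "HOL-Analysis.Analysis"
begin

definition vabs :: "real^'n \<Rightarrow> real^'n" where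
  "vabs x = (\<chi> i. \<bar>x $ i\<bar>)"

definition diag :: "real^'n \<Rightarrow> real^'n^'n" where
  "diag s = (\<chi> i j. if i = j then s $ i else 0)"

definition vsign :: "real^'n \<Rightarrow> real^'n" where
  "vsign x = (\<chi> i. sgn (x $ i))"

definition has_sign_pattern :: "real^'n \<Rightarrow> real^'n \<Rightarrow> bool" where
  "has_sign_pattern x s \<longleftrightarrow> (\<forall>i. sgn (x $ i) = s $ i)"

end

theory Submission
  imports Defs
begin
lemma kernel_supported:
  fixes M :: "real^'n^'m" and S :: "'n set"
  assumes "card S > rank M"
  shows "\<exists>z. z \<noteq> 0 \<and> M *v z = 0 \<and> (\<forall>i. i \<notin> S \<longrightarrow> z$i = 0)"
proof (rule ccontr)
  assume nz: "\<not> ?thesis"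
  define T where "T = (\<lambda>i. axis i (1::real)) ` S"
  have indT: "independent T" unfolding T_def
    by (rule independent_substdbasis) (auto simp: axis_in_Basis_iff)
  have cT: "card T = card S" unfolding T_def
    by (rule card_image) (auto simp: inj_on_def axis_eq_axis)
  have sub: "subspace {z::real^'n. \<forall>i. i \<notin> S \<longrightarrow> z$i = 0}"
    unfolding subspace_def by auto
  have spT: "span T \<subseteq> {z::real^'n. \<forall>i. i \<notin> S \<longrightarrow> z$i = 0}"
    by (rule span_minimal[OF _ sub]) (auto simp: T_def axis_def)
  have inj: "inj_on ((*v) M) (span T)"
  proof (rule inj_onI)
    fix u v assume u: "u \<in> span T" and v: "v \<in> span T" and e: "M *v u = M *v v"
    have "u - v \<in> span T" using u v by (rule span_diff)
    hence "\<forall>i. i \<notin> S \<longrightarrow> (u - v)$i = 0" using spT by auto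
    moreover have "M *v (u - v) = 0" using e by (simp add: matrix_vector_mult_diff_distrib)
    ultimately show "u = v" using nz by auto
  qed
  have "dim ((*v) M ` T) = dim T"
    by (rule dim_image_eq[OF _ inj]) (simp add: matrix_vector_mul_linear)
  also have "\<dots> = card S" using indT cT by (simp add: dim_eq_card_independent)
  finally have "card S = dim ((*v) M ` T)" by simp
  also have "\<dots> \<le> rank M" unfolding rank_dim_range by (rule dim_subset) auto
  finally show False using assms by simp
qed

lemma diag_mult: "diag s *v v = (\<chi> i. s$i * v$i)"
proof -
  have "(\<Sum>j\<in>UNIV. (if i = j then s$i else 0) * v$j) = s$i * v$i" for i
  proof -
    have "(\<Sum>j\<in>UNIV. (if i = j then s$i else 0) * v$j) = (\<Sum>j\<in>UNIV. if i = j then s$i * v$j else 0)"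
      by (rule sum.cong) auto
    thus ?thesis by simp
  qed
  thus ?thesis by (simp add: matrix_vector_mult_def diag_def vec_eq_iff)
qed

theorem theorem3p4:
  fixes A B :: "real^'n^'m" and b :: "real^'m" and xs s :: "real^'n"
  assumes "CARD('m) < CARD('n)"
    and eq: "A *v xs - B *v vabs xs = b"
    and sdef: "s = vsign xs"
    and rk: "card {i. xs $ i \<noteq> 0} > rank (A ** diag s - B)"
  shows "infinite {x. A *v x - B *v vabs x = b \<and> has_sign_pattern x s}"
proof -
  define S where "S = {i. xs $ i \<noteq> 0}"
  define M where "M = A ** diag s - B"
  obtain z where z: "z \<noteq> 0" "M *v z = 0" "\<And>i. i \<notin> S \<Longrightarrow> z$i = 0"
    using kernel_supported[of M S] rk unfolding S_def M_def by auto
  have si: "s$i = sgn (xs$i)" for i using sdef by (simp add: vsign_def)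
  define y where "y t = vabs xs + t *\<^sub>R z" for t :: real
  define x where "x t = (\<chi> i. s$i * (\<bar>xs$i\<bar> + t * z$i))" for t :: real
  have ev: "\<forall>\<^sub>F t in at_right 0. \<forall>i\<in>S. \<bar>xs$i\<bar> + t * z$i > 0"
  proof (rule eventually_ball_finite)
    show "finite S" by simp
    show "\<forall>i\<in>S. \<forall>\<^sub>F t in at_right 0. \<bar>xs$i\<bar> + t * z$i > 0"
    proof
      fix i assume "i \<in> S"
      hence pos: "\<bar>xs$i\<bar> > 0" by (simp add: S_def)
      have "((\<lambda>t. \<bar>xs$i\<bar> + t * z$i) \<longlongrightarrow> \<bar>xs$i\<bar> + 0 * z$i) (at_right (0::real))"
        by (intro tendsto_intros)
      thus "\<forall>\<^sub>F t in at_right 0. \<bar>xs$i\<bar> + t * z$i > 0"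
        using pos by (simp add: order_tendstoD(1))
    qed
  qed
  then obtain e :: real where e: "e > 0" "\<And>t. t > 0 \<Longrightarrow> t < e \<Longrightarrow> \<forall>i\<in>S. \<bar>xs$i\<bar> + t * z$i > 0"
    by (auto simp: eventually_at_right_field)
  have xdiag: "x t = diag s *v y t" for t
    by (simp add: x_def y_def diag_mult vabs_def)
  have xsdiag: "diag s *v vabs xs = xs"
    by (simp add: diag_mult vabs_def si vec_eq_iff sgn_mult_abs)
  have Mb: "M *v vabs xs = b"
    using eq xsdiag by (simp add: M_def matrix_vector_mult_diff_rdistrib matrix_vector_mul_assoc[symmetric])
  have sol: "x t \<in> {x. A *v x - B *v vabs x = b \<and> has_sign_pattern x s}" if t: "t > 0" "t < e" for t
  proof -
    have P: "\<forall>i\<in>S. \<bar>xs$i\<bar> + t * z$i > 0" using e t by auto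
    have va: "vabs (x t) = y t"
    proof -
      have "\<bar>s$i * (\<bar>xs$i\<bar> + t * z$i)\<bar> = \<bar>xs$i\<bar> + t * z$i" for i
      proof (cases "i \<in> S")
        case True
        then show ?thesis using P by (auto simp: si S_def abs_mult sgn_if)
      next
        case False
        then show ?thesis using z(3)[of i] by (simp add: S_def)
      qed
      thus ?thesis by (simp add: vabs_def x_def y_def vec_eq_iff)
    qed
    have "A *v x t - B *v vabs (x t) = M *v y t"
      unfolding va by (simp add: xdiag M_def matrix_vector_mult_diff_rdistrib matrix_vector_mul_assoc)
    also have "\<dots> = b" using Mb z(2) by (simp add: y_def matrix_vector_right_distrib matrix_vector_mult_scaleR)
    finally have 1: "A *v x t - B *v vabs (x t) = b" .
    have "sgn (x t $ i) = s $ i" for i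
    proof (cases "i \<in> S")
      case True
      then show ?thesis using P by (auto simp: si S_def x_def sgn_mult)
    next
      case False
      then show ?thesis using z(3)[of i] by (simp add: S_def x_def si)
    qed
    thus ?thesis using 1 by (simp add: has_sign_pattern_def)
  qed
  have inj: "inj_on x {0<..<e}"
  proof (rule inj_onI)
    fix t1 t2 assume "x t1 = x t2"
    obtain i where "z$i \<noteq> 0" using z(1) by (metis vec_eq_iff zero_index)
    moreover hence "i \<in> S" using z(3) by blast
    moreover have "s$i * (\<bar>xs$i\<bar> + t1 * z$i) = s$i * (\<bar>xs$i\<bar> + t2 * z$i)"
      using \<open>x t1 = x t2\<close> by (simp add: x_def vec_eq_iff)
    ultimately show "t1 = t2" by (auto simp: si S_def sgn_if split: if_splits)
  qed
  have "infinite (x ` {0<..<e})"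
    using inj e(1) by (simp add: finite_image_iff)
  moreover have "x ` {0<..<e} \<subseteq> {x. A *v x - B *v vabs x = b \<and> has_sign_pattern x s}"
    using sol by auto
  ultimately show ?thesis using finite_subset by blast
qed
end
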